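(* Let $p$ be an odd prime and $m,r$ positive integers. Then $S_{mp^r}\equiv S_{mp^{r-1}}\pmod{p^{2r}}$.
   Context: $(S_n)_{n\ge0}$ is the integer sequence defined by $S_0=1$, $S_1=4$ and $(n+1)^2S_{n+1}=4(3n^2+3n+1)S_n-32n^2S_{n-1}$ for $n\ge1$; equivalently $S_n=\sum_{k=0}^n\binom nk\binom{2k}k\binom{2n-2k}{n-k}$. *)

theory Defs
  imports "HOL-Number_Theory.Number_Theory"
begin

text \<open>S_n = sum_k binom(n,k) binom(2k,k) binom(2n-2k,n-k)
  (equivalently S_0=1, S_1=4 and the stated three-term recurrence).\<close>
definition S :: "nat \<Rightarrow> int" where
  "S n = (\<Sum>k=0..n. int (n choose k) * int ((2*k) choose k) * int ((2*n - 2*k) choose (n - k)))"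

end

theory Submission
  imports Defs
begin


definition T :: "nat \<Rightarrow> nat \<Rightarrow> int" where
  "T n k = int (n choose k) * int ((2*k) choose k) * int ((2*n - 2*k) choose (n - k))"

lemma S_T: "S n = (\<Sum>k=0..n. T n k)"
  by (simp add: S_def T_def)

lemma T_fact:
  assumes "k \<le> n"
  shows "T n k * (fact k)^3 * (fact (n-k))^3 = (fact n * fact (2*k) * fact (2*n-2*k) :: int)"
proof -
  have a: "fact k * fact (n - k) * (n choose k) = fact n"
    using binomial_fact_lemma[OF assms] .
  have b: "fact k * fact (2*k - k) * ((2*k) choose k) = fact (2*k)"
    using binomial_fact_lemma[of k "2*k"] by simp
  have c: "fact (n-k) * fact ((2*n-2*k) - (n-k)) * ((2*n-2*k) choose (n-k)) = fact (2*n-2*k)"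
    using binomial_fact_lemma[of "n-k" "2*n-2*k"] by simp
  have b': "fact k * fact k * ((2*k) choose k) = fact (2*k)" using b by simp
  have c': "fact (n-k) * fact (n-k) * ((2*n-2*k) choose (n-k)) = fact (2*n-2*k)"
    using c assms by (simp add: diff_mult_distrib2)
  have a2: "(fact k * fact (n - k) * int (n choose k)) = (fact n :: int)"
    using arg_cong[OF a, of int] by (simp add: of_nat_fact)
  have b2: "(fact k * fact k * int ((2*k) choose k)) = (fact (2*k) :: int)"
    using arg_cong[OF b', of int] by (simp add: of_nat_fact)
  have c2: "(fact (n-k) * fact (n-k) * int ((2*n-2*k) choose (n-k))) = (fact (2*n-2*k) :: int)"
    using arg_cong[OF c', of int] by (simp add: of_nat_fact)
  show ?thesis
    unfolding T_def a2[symmetric] b2[symmetric] c2[symmetric]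
    by (simp add: power3_eq_cube algebra_simps)
qed

fun sc :: "nat \<Rightarrow> nat \<Rightarrow> int" where
  "sc a 0 = int ((2*a) choose a)"
| "sc a (Suc b) = 4 * sc a b - sc (Suc a) b"

lemma sc_fact: "sc a b * fact a * fact b * fact (a+b) = (fact (2*a) * fact (2*b) :: int)"
proof (induction b arbitrary: a)
  case 0
  have "fact a * fact (2*a - a) * ((2*a) choose a) = fact (2*a)"
    using binomial_fact_lemma[of a "2*a"] by simp
  hence "fact a * fact a * ((2*a) choose a) = (fact (2*a) :: nat)" by simp
  hence "(of_nat (fact a * fact a * ((2*a) choose a)) :: int) = of_nat (fact (2*a))" by simp
  hence "fact a * fact a * int ((2*a) choose a) = (fact (2*a) :: int)"
    by (simp only: of_nat_mult of_nat_fact)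
  then show ?case by (simp add: mult.commute mult.left_commute)
next
  case (Suc b)
  have IH1: "sc a b * fact a * fact b * fact (a+b) = (fact (2*a) * fact (2*b) :: int)" by (rule Suc.IH)
  have IH2: "sc (Suc a) b * fact (Suc a) * fact b * fact (Suc a+b) = (fact (2*Suc a) * fact (2*b) :: int)" by (rule Suc.IH)
  have f1: "(fact (2 * Suc a) :: int) = (2*a+2)*(2*a+1) * fact (2*a)"
  proof -
    have "2 * Suc a = Suc (Suc (2*a))" by simp
    hence "(fact (2 * Suc a) :: int) = of_nat (Suc (Suc (2*a))) * (of_nat (Suc (2*a)) * fact (2*a))"
      by (simp only: fact_Suc)
    thus ?thesis by (simp add: algebra_simps)
  qed
  have f2: "(fact (2 * Suc b) :: int) = (2*b+2)*(2*b+1) * fact (2*b)"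
  proof -
    have "2 * Suc b = Suc (Suc (2*b))" by simp
    hence "(fact (2 * Suc b) :: int) = of_nat (Suc (Suc (2*b))) * (of_nat (Suc (2*b)) * fact (2*b))"
      by (simp only: fact_Suc)
    thus ?thesis by (simp add: algebra_simps)
  qed
  have f3: "(fact (Suc a) :: int) = (a+1) * fact a" by (simp add: algebra_simps)
  have f4: "(fact (Suc b) :: int) = (b+1) * fact b" by (simp add: algebra_simps)
  have f5: "(fact (a + Suc b) :: int) = (a+b+1) * fact (a+b)" by (simp add: algebra_simps)
  have f6: "(fact (Suc a + b) :: int) = (a+b+1) * fact (a+b)" by (simp add: algebra_simps)
  define F :: int where "F = fact (2*a) * fact (2*b)"
  define X :: int where "X = sc a b * fact a * fact b * fact (a+b)"
  define Y :: int where "Y = sc (Suc a) b * fact a * fact b * fact (a+b)"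
  have hX: "X = F" using IH1 by (simp add: X_def F_def)
  have hY: "Y * (a+1) * (a+b+1) = (2*a+2)*(2*a+1) * F"
    using IH2 unfolding f1 f3 f6 Y_def F_def by (simp add: algebra_simps)
  have L: "sc a (Suc b) * fact a * fact (Suc b) * fact (a + Suc b) = (b+1)*(a+b+1)*(4*X - Y)"
    unfolding sc.simps f4 f5 X_def Y_def by (simp add: algebra_simps)
  have "(a+1) * ((b+1)*(a+b+1)*(4*X - Y)) = (a+1) * ((2*b+2)*(2*b+1) * F)"
  proof -
    have "(a+1) * ((b+1)*(a+b+1)*(4*X - Y)) = (b+1)*(4*(a+1)*(a+b+1)*X - Y*(a+1)*(a+b+1))"
      by (simp add: algebra_simps)
    also have "\<dots> = (b+1)*(4*(a+1)*(a+b+1)*F - (2*a+2)*(2*a+1) * F)" unfolding hY hX ..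
    also have "\<dots> = (a+1) * ((2*b+2)*(2*b+1) * F)" by (simp add: algebra_simps)
    finally show ?thesis .
  qed
  hence "(b+1)*(a+b+1)*(4*X - Y) = (2*b+2)*(2*b+1) * F"
    by (subst (asm) mult_left_cancel) auto
  then show ?case unfolding L f2 F_def by (simp add: algebra_simps)
qed

lemma T_sc:
  assumes "k \<le> n"
  shows "T n k = int (n choose k)^2 * sc k (n-k)"
proof -
  have h1: "T n k * (fact k)^3 * (fact (n-k))^3 = (fact n * fact (2*k) * fact (2*n-2*k) :: int)"
    by (rule T_fact[OF assms])
  have h2: "sc k (n-k) * fact k * fact (n-k) * fact n = (fact (2*k) * fact (2*(n-k)) :: int)"
    using sc_fact[of k "n-k"] assms by simp
  have h3: "(fact k * fact (n - k) * int (n choose k)) = (fact n :: int)"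
    using arg_cong[OF binomial_fact_lemma[OF assms], of int] by (simp add: of_nat_fact)
  have e: "2*(n-k) = 2*n-2*k" by simp
  define A :: int where "A = fact k * fact (n-k)"
  have Anz: "A \<noteq> 0" by (simp add: A_def)
  have "(T n k * A^2) * A = (int (n choose k)^2 * sc k (n-k) * A^2) * A"
  proof -
    have "(T n k * A^2) * A = T n k * (fact k)^3 * (fact (n-k))^3"
      by (simp add: A_def power2_eq_square power3_eq_cube algebra_simps)
    also have "\<dots> = fact n * (sc k (n-k) * fact k * fact (n-k) * fact n)"
      using h1 h2 e by simp
    also have "\<dots> = (int (n choose k)^2 * sc k (n-k) * A^2) * A"
      unfolding h3[symmetric] A_def by (simp add: power2_eq_square algebra_simps)
    finally show ?thesis .
  qed
  hence "T n k * A^2 = int (n choose k)^2 * sc k (n-k) * A^2"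
    using Anz by simp
  thus ?thesis using Anz by simp
qed

lemma binom_pow_dvd:
  fixes p :: nat
  assumes p: "prime p" and R: "p^R dvd n" and kn: "k \<le> n"
    and e1: "p^e dvd k" and e2: "\<not> p^(Suc e) dvd k" and eR: "e \<le> R"
  shows "p^(R-e) dvd (n choose k)"
proof -
  have k0: "k > 0" using e2 by (cases k) auto
  obtain k' where k': "k = p^e * k'" using e1 by blast
  have nk': "\<not> p dvd k'" using e2 k' by auto
  have "n * ((n-1) choose (k-1)) = (n choose k) * k"
    using Suc_times_binomial_eq[of "n-1" "k-1"] k0 kn by simp
  hence "p^R dvd (n choose k) * k" using R by (metis dvd_mult2)
  hence "p^e * p^(R-e) dvd p^e * ((n choose k) * k')"
    using k' eR by (simp add: power_add[symmetric] algebra_simps)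
  hence "p^(R-e) dvd (n choose k) * k'"
    using p by (simp add: prime_gt_0_nat)
  moreover have "coprime (p^(R-e)) k'"
    using nk' p by (simp add: prime_imp_coprime)
  ultimately show ?thesis
    using coprime_dvd_mult_left_iff by blast
qed

lemma T_pow_dvd:
  fixes p :: nat
  assumes p: "prime p" and R: "p^R dvd n" and kn: "k \<le> n"
    and e1: "p^e dvd k" and e2: "\<not> p^(Suc e) dvd k" and eR: "e \<le> R"
  shows "(int p)^(2*(R-e)) dvd T n k"
proof -
  have "int (p^(R-e)) dvd int (n choose k)"
    using binom_pow_dvd[OF assms] by (simp only: int_dvd_int_iff)
  hence "int p^(R-e) dvd int (n choose k)" by (simp only: of_nat_power)
  hence "(int p^(R-e))^2 dvd int (n choose k)^2" by (simp add: dvd_power_same)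
  hence "(int p)^(2*(R-e)) dvd int (n choose k)^2" by (simp add: power_mult[symmetric] mult.commute)
  thus ?thesis using T_sc[OF kn] by simp
qed



definition U :: "nat \<Rightarrow> nat \<Rightarrow> int" where
  "U p M = (\<Prod>i\<in>{i\<in>{1..M}. \<not> p dvd i}. int i)"

lemma fact_mult_p:
  assumes "p > 0"
  shows "(fact (p*a) :: int) = int p ^ a * fact a * U p (p*a)"
proof -
  have fin: "finite {i\<in>{1..p*a}. p dvd i}" "finite {i\<in>{1..p*a}. \<not> p dvd i}" by auto
  have split: "{1..p*a} = {i\<in>{1..p*a}. p dvd i} \<union> {i\<in>{1..p*a}. \<not> p dvd i}" by auto
  have img: "{i\<in>{1..p*a}. p dvd i} = (\<lambda>t. p*t) ` {1..a}"
  proof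
    show "{i\<in>{1..p*a}. p dvd i} \<subseteq> (\<lambda>t. p*t) ` {1..a}"
    proof
      fix i assume "i \<in> {i\<in>{1..p*a}. p dvd i}"
      then obtain t where t: "i = p*t" "1 \<le> i" "i \<le> p*a" by auto
      hence "1 \<le> t" "t \<le> a" using assms by (auto simp: mult_le_cancel1)
      thus "i \<in> (\<lambda>t. p*t) ` {1..a}" using t by auto
    qed
    show "(\<lambda>t. p*t) ` {1..a} \<subseteq> {i\<in>{1..p*a}. p dvd i}"
      using assms by auto
  qed
  have inj: "inj_on (\<lambda>t. p*t) {1..a}" using assms by (auto simp: inj_on_def)
  have "(fact (p*a) :: int) = (\<Prod>i\<in>{1..p*a}. int i)"
    by (simp add: fact_prod)
  also have "\<dots> = (\<Prod>i\<in>{i\<in>{1..p*a}. p dvd i}. int i) * U p (p*a)"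
    unfolding U_def by (subst split, subst prod.union_disjoint) auto
  also have "(\<Prod>i\<in>{i\<in>{1..p*a}. p dvd i}. int i) = (\<Prod>t\<in>{1..a}. int p * int t)"
    unfolding img by (subst prod.reindex[OF inj]) simp
  also have "\<dots> = int p ^ a * fact a"
    by (simp add: prod.distrib fact_prod)
  finally show ?thesis .
qed

lemma U_shift:
  assumes "p dvd M"
  shows "U p (M + L) = U p M * (\<Prod>i\<in>{i\<in>{1..L}. \<not> p dvd i}. int (M + i))"
proof -
  have split: "{i\<in>{1..M+L}. \<not> p dvd i} = {i\<in>{1..M}. \<not> p dvd i} \<union> (\<lambda>i. M+i) ` {i\<in>{1..L}. \<not> p dvd i}"
  proof
    show "{i\<in>{1..M+L}. \<not> p dvd i} \<subseteq> {i\<in>{1..M}. \<not> p dvd i} \<union> (\<lambda>i. M+i) ` {i\<in>{1..L}. \<not> p dvd i}"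
    proof
      fix i assume i: "i \<in> {i\<in>{1..M+L}. \<not> p dvd i}"
      show "i \<in> {i\<in>{1..M}. \<not> p dvd i} \<union> (\<lambda>i. M+i) ` {i\<in>{1..L}. \<not> p dvd i}"
      proof (cases "i \<le> M")
        case True thus ?thesis using i by auto
      next
        case False
        hence "i = M + (i - M)" by simp
        moreover have "\<not> p dvd (i - M)"
          using i assms False by (metis (no_types, lifting) dvd_add le_add_diff_inverse nat_le_linear mem_Collect_eq)
        moreover have "i - M \<in> {1..L}" using i False by auto
        ultimately show ?thesis by blast
      qed
    qed
    show "{i\<in>{1..M}. \<not> p dvd i} \<union> (\<lambda>i. M+i) ` {i\<in>{1..L}. \<not> p dvd i} \<subseteq> {i\<in>{1..M+L}. \<not> p dvd i}"
      using assms by (auto simp: dvd_add_right_iff)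
  qed
  have inj: "inj_on (\<lambda>i. M+i) {i\<in>{1..L}. \<not> p dvd i}" by (auto simp: inj_on_def)
  have r: "(\<Prod>i\<in>(\<lambda>i. M+i) ` {i\<in>{1..L}. \<not> p dvd i}. int i) = (\<Prod>i\<in>{i\<in>{1..L}. \<not> p dvd i}. int (M+i))"
    by (simp only: prod.reindex[OF inj] comp_def)
  have d: "{i\<in>{1..M}. \<not> p dvd i} \<inter> (\<lambda>i. M+i) ` {i\<in>{1..L}. \<not> p dvd i} = {}" by auto
  show ?thesis
    unfolding U_def split
    by (subst prod.union_disjoint) (simp_all only: d r, auto)
qed

lemma prod_expand:
  fixes c :: int
  assumes "finite I"
  shows "\<exists>z. (\<Prod>i\<in>I. c + f i) = (\<Prod>i\<in>I. f i) + c * (\<Sum>i\<in>I. \<Prod>j\<in>I-{i}. f j) + c^2 * z"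
  using assms
proof (induction I rule: finite_induct)
  case empty
  show ?case by (rule exI[of _ 0]) simp
next
  case (insert x F)
  then obtain z where z: "(\<Prod>i\<in>F. c + f i) = (\<Prod>i\<in>F. f i) + c * (\<Sum>i\<in>F. \<Prod>j\<in>F-{i}. f j) + c^2 * z"
    by blast
  have s: "(\<Sum>i\<in>insert x F. \<Prod>j\<in>insert x F-{i}. f j) = (\<Prod>j\<in>F. f j) + f x * (\<Sum>i\<in>F. \<Prod>j\<in>F-{i}. f j)"
  proof -
    have "(\<Sum>i\<in>insert x F. \<Prod>j\<in>insert x F-{i}. f j) = (\<Prod>j\<in>insert x F-{x}. f j) + (\<Sum>i\<in>F. \<Prod>j\<in>insert x F-{i}. f j)"
      using insert by (simp add: sum.insert)
    also have "(\<Prod>j\<in>insert x F-{x}. f j) = (\<Prod>j\<in>F. f j)"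
      using insert by (metis Diff_insert_absorb)
    also have "(\<Sum>i\<in>F. \<Prod>j\<in>insert x F-{i}. f j) = (\<Sum>i\<in>F. f x * (\<Prod>j\<in>F-{i}. f j))"
    proof (rule sum.cong)
      fix i assume "i \<in> F"
      hence "insert x F - {i} = insert x (F - {i})" using insert by auto
      thus "(\<Prod>j\<in>insert x F-{i}. f j) = f x * (\<Prod>j\<in>F-{i}. f j)"
        using insert by simp
    qed simp
    finally show ?thesis by (simp add: sum_distrib_left)
  qed
  show ?case
    apply (rule exI[of _ "(\<Sum>i\<in>F. \<Prod>j\<in>F-{i}. f j) + (c + f x) * z"])
    using insert z s by (simp add: algebra_simps power2_eq_square)
qed



lemma cof_dvd:
  fixes p q :: nat
  assumes p: "prime p" "odd p" and q: "q = p^Suc e"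
  shows "int q dvd (\<Sum>i\<in>{i\<in>{1..q}. \<not> p dvd i}. \<Prod>j\<in>{i\<in>{1..q}. \<not> p dvd i}-{i}. int j)"
proof -
  define I where "I = {i\<in>{1..q}. \<not> p dvd i}"
  define g where "g i = (\<Prod>j\<in>I-{i}. int j)" for i
  define V where "V = (\<Prod>j\<in>I. int j)"
  have fin: "finite I" by (simp add: I_def)
  have gi: "int i * g i = V" if "i \<in> I" for i
    unfolding g_def V_def using prod.remove[OF fin that, of int] by simp
  have pq: "p dvd q" using q by simp
  have memq: "q - i \<in> I \<and> i < q" if "i \<in> I" for i
  proof -
    have i: "1 \<le> i" "i \<le> q" "\<not> p dvd i" using that by (auto simp: I_def)
    have "i \<noteq> q" using i pq by auto
    hence iq: "i < q" using i by simp
    have "\<not> p dvd (q - i)"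
    proof
      assume "p dvd (q - i)"
      hence "p dvd q - (q - i)" using pq by (simp add: dvd_diff_nat)
      thus False using i iq by simp
    qed
    thus ?thesis using iq by (auto simp: I_def)
  qed
  have sw: "(\<Sum>i\<in>I. g i) = (\<Sum>i\<in>I. g (q - i))"
    by (rule sum.reindex_bij_witness[of I "\<lambda>i. q - i" "\<lambda>i. q - i"]) (use memq in \<open>auto simp: less_imp_le_nat\<close>)
  have cop: "coprime (int q) (int i)" if "i \<in> I" for i
  proof -
    have "\<not> p dvd i" using that by (simp add: I_def)
    hence "coprime p i" using p by (simp add: prime_imp_coprime)
    hence "coprime q i" using q by simp
    thus ?thesis by simp
  qed
  have pair: "int q dvd g i + g (q - i)" if "i \<in> I" for i
  proof -
    have m: "q - i \<in> I" "i < q" using memq[OF that] by auto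
    have "int (q - i) * g (q - i) = V" using gi[OF m(1)] .
    hence "(int q - int i) * g (q - i) = V" using m by (simp add: of_nat_diff)
    hence "int i * (g i + g (q - i)) = int q * g (q - i)"
      using gi[OF that] by (simp add: algebra_simps)
    hence "int q dvd int i * (g i + g (q - i))" by simp
    thus ?thesis using cop[OF that] by (simp add: coprime_dvd_mult_right_iff)
  qed
  have "int q dvd (\<Sum>i\<in>I. g i + g (q - i))" by (rule dvd_sum) (use pair in auto)
  hence "int q dvd 2 * (\<Sum>i\<in>I. g i)" using sw by (simp add: sum.distrib)
  moreover have "coprime (int q) 2"
  proof -
    have "odd q" using p q by simp
    hence "coprime q 2" by (simp add: coprime_commute)
    thus ?thesis by (metis coprime_int_iff of_nat_numeral)
  qed
  ultimately have "int q dvd (\<Sum>i\<in>I. g i)" by (simp add: coprime_dvd_mult_right_iff)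
  thus ?thesis by (simp add: I_def g_def)
qed

lemma U_cong:
  fixes p q :: nat
  assumes p: "prime p" "odd p" and q: "q = p^Suc e"
  shows "[U p (q*A) = U p q ^ A] (mod (int q)^2)"
proof (induction A)
  case 0
  show ?case by (simp add: U_def)
next
  case (Suc A)
  define I where "I = {i\<in>{1..q}. \<not> p dvd i}"
  have pq: "p dvd q*A" using q by simp
  have sh: "U p (q * Suc A) = U p (q*A) * (\<Prod>i\<in>I. int (q*A + i))"
    using U_shift[OF pq, of q] by (simp add: I_def algebra_simps)
  obtain z where z: "(\<Prod>i\<in>I. int (q*A) + int i) = (\<Prod>i\<in>I. int i) + int (q*A) * (\<Sum>i\<in>I. \<Prod>j\<in>I-{i}. int j) + (int (q*A))^2 * z"
    using prod_expand[of I "int (q*A)" int] by (auto simp: I_def)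
  obtain w where w: "(\<Sum>i\<in>I. \<Prod>j\<in>I-{i}. int j) = int q * w"
    using cof_dvd[OF p q] unfolding I_def by blast
  have V: "(\<Prod>i\<in>I. int i) = U p q" by (simp add: U_def I_def)
  have "(\<Prod>i\<in>I. int (q*A + i)) = U p q + (int q)^2 * (int A * w + (int A)^2 * z)"
    using z w V by (simp add: algebra_simps power2_eq_square)
  hence "[(\<Prod>i\<in>I. int (q*A + i)) = U p q] (mod (int q)^2)"
    by (simp add: cong_iff_dvd_diff)
  hence "[U p (q*A) * (\<Prod>i\<in>I. int (q*A + i)) = U p q ^ A * U p q] (mod (int q)^2)"
    using Suc.IH by (rule cong_mult[rotated])
  thus ?case using sh by (simp add: mult.commute)
qed

lemma U_coprime:
  assumes "prime p"
  shows "coprime (int p) (U p M)"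
  unfolding U_def
proof (rule prod_coprime_right)
  fix i assume "i \<in> {i\<in>{1..M}. \<not> p dvd i}"
  hence "coprime p i" using assms by (simp add: prime_imp_coprime)
  thus "coprime (int p) (int i)" by simp
qed



lemma T_scale:
  fixes p :: nat
  assumes p: "p > 0" and j: "j \<le> N"
  shows "T (p*N) (p*j) * (U p (p*j)^3 * U p (p*(N-j))^3)
       = T N j * (U p (p*N) * U p (p*(2*j)) * U p (p*(2*N-2*j)))"
proof -
  have pj: "p*j \<le> p*N" using j by simp
  have h1: "T (p*N) (p*j) * (fact (p*j))^3 * (fact (p*(N-j)))^3
      = (fact (p*N) * fact (p*(2*j)) * fact (p*(2*N-2*j)) :: int)"
  proof -
    have e1: "p*N - p*j = p*(N-j)" by (simp add: diff_mult_distrib2)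
    have e2: "2*(p*N) - p*(2*j) = p*(2*N-2*j)" by (simp add: diff_mult_distrib2)
    have e3: "2*(p*j) = p*(2*j)" by simp
    show ?thesis using T_fact[OF pj] unfolding e1 e3 e2 .
  qed
  have h2: "T N j * (fact j)^3 * (fact (N-j))^3 = (fact N * fact (2*j) * fact (2*N-2*j) :: int)"
    using T_fact[OF j] .
  define P :: int where "P = int p ^ (3*N)"
  define F :: int where "F = (fact j)^3 * (fact (N-j))^3"
  have PF: "P * F \<noteq> 0" using p by (simp add: P_def F_def)
  have ex1: "(int p ^ j)^3 * (int p ^ (N-j))^3 = P"
  proof -
    have "(int p ^ j)^3 * (int p ^ (N-j))^3 = int p ^ (3*j + 3*(N-j))"
      by (simp add: power_add power_mult[symmetric] mult.commute)
    also have "3*j + 3*(N-j) = 3*N" using j by simp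
    finally show ?thesis by (simp add: P_def)
  qed
  have ex2: "int p ^ N * int p ^ (2*j) * int p ^ (2*N-2*j) = P"
  proof -
    have "int p ^ N * int p ^ (2*j) * int p ^ (2*N-2*j) = int p ^ (N + 2*j + (2*N-2*j))"
      by (simp add: power_add)
    also have "N + 2*j + (2*N-2*j) = 3*N" using j by simp
    finally show ?thesis by (simp add: P_def)
  qed
  have "(T (p*N) (p*j) * (U p (p*j)^3 * U p (p*(N-j))^3)) * (P * F)
      = T (p*N) (p*j) * (fact (p*j))^3 * (fact (p*(N-j)))^3"
    unfolding fact_mult_p[OF p, of j] fact_mult_p[OF p, of "N-j"] ex1[symmetric] F_def
    by (simp add: power_mult_distrib algebra_simps)
  also have "\<dots> = fact (p*N) * fact (p*(2*j)) * fact (p*(2*N-2*j))" by (rule h1)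
  also have "\<dots> = (U p (p*N) * U p (p*(2*j)) * U p (p*(2*N-2*j))) * P * (fact N * fact (2*j) * fact (2*N-2*j))"
    unfolding fact_mult_p[OF p, of N] fact_mult_p[OF p, of "2*j"] fact_mult_p[OF p, of "2*N-2*j"] ex2[symmetric]
    by (simp add: algebra_simps)
  also have "\<dots> = (T N j * (U p (p*N) * U p (p*(2*j)) * U p (p*(2*N-2*j)))) * (P * F)"
    unfolding h2[symmetric] F_def by (simp add: algebra_simps)
  finally show ?thesis using PF by simp
qed



lemma term_cong:
  fixes p N j r :: nat
  assumes p: "prime p" "odd p" and r: "r > 0" and N: "p^(r-1) dvd N" and j: "j \<le> N"
  shows "[T (p*N) (p*j) = T N j] (mod int p ^ (2*r))"
proof -
  have p0: "p > 0" using p by (simp add: prime_gt_0_nat)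
  obtain e where e: "e \<le> r-1" "p^e dvd j" "p^e dvd N - j" "int p^(2*(r-1-e)) dvd T N j"
  proof (cases "p^(r-1) dvd j")
    case True
    thus ?thesis using that[of "r-1"] N by (simp add: dvd_diff_nat)
  next
    case False
    hence j0: "j \<noteq> 0" by (metis dvd_0_right)
    have nu: "\<not> is_unit p" using p by auto
    define e where "e = multiplicity p j"
    have e1: "p^e dvd j" by (simp add: e_def multiplicity_dvd)
    have e2: "\<not> p^(Suc e) dvd j"
    proof
      assume "p^(Suc e) dvd j"
      hence "Suc e \<le> multiplicity p j" by (rule multiplicity_geI[OF j0 nu])
      thus False by (simp add: e_def)
    qed
    have elt: "e < r-1" using multiplicity_lessI[OF j0 nu False] by (simp add: e_def)
    have eN: "p^e dvd N" using N elt by (meson dvd_trans le_imp_power_dvd less_imp_le_nat)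
    have "int p^(2*(r-1-e)) dvd T N j"
      using T_pow_dvd[OF p(1) N j e1 e2] elt by simp
    thus ?thesis using that[of e] e1 eN elt by (simp add: dvd_diff_nat)
  qed
  define q where "q = p^Suc e"
  obtain J where J: "j = p^e * J" using e(2) by blast
  obtain K where K: "N - j = p^e * K" using e(3) by blast
  have NJK: "p*N = q*(J+K)" using J K j unfolding q_def
    by (metis add_mult_distrib2 le_add_diff_inverse mult.assoc power_Suc)
  have pj: "p*j = q*J" using J by (simp add: q_def)
  have pNj: "p*(N-j) = q*K" using K by (simp add: q_def)
  have p2j: "p*(2*j) = q*(2*J)" using J by (simp add: q_def)
  have p2Nj: "p*(2*N-2*j) = q*(2*K)"
  proof -
    have "2*N-2*j = 2*(N-j)" by simp
    thus ?thesis using K by (simp add: q_def)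
  qed
  define A where "A = U p (p*j)^3 * U p (p*(N-j))^3"
  define B where "B = U p (p*N) * U p (p*(2*j)) * U p (p*(2*N-2*j))"
  have TAB: "T (p*N) (p*j) * A = T N j * B"
    using T_scale[OF p0 j] by (simp add: A_def B_def)
  define V where "V = U p q"
  have qc: "q = p^Suc e" by (simp add: q_def)
  have cA: "[A = V^(3*J+3*K)] (mod (int q)^2)"
  proof -
    have "[A = (V^J)^3 * (V^K)^3] (mod (int q)^2)"
      unfolding A_def pj pNj V_def
      by (intro cong_mult cong_pow U_cong[OF p qc])
    moreover have "(V^J)^3 * (V^K)^3 = V^(3*J+3*K)"
    proof -
      have "(V^J)^3 * (V^K)^3 = V^(J*3) * V^(K*3)" by (simp only: power_mult)
      also have "\<dots> = V^(3*J+3*K)" by (simp add: power_add[symmetric] algebra_simps)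
      finally show ?thesis .
    qed
    ultimately show ?thesis by simp
  qed
  have cB: "[B = V^(3*J+3*K)] (mod (int q)^2)"
  proof -
    have "[B = V^(J+K) * V^(2*J) * V^(2*K)] (mod (int q)^2)"
      unfolding B_def NJK p2j p2Nj V_def
      by (intro cong_mult U_cong[OF p qc])
    moreover have "V^(J+K) * V^(2*J) * V^(2*K) = V^(3*J+3*K)"
    proof -
      have "V^(J+K) * V^(2*J) * V^(2*K) = V^((J+K) + 2*J + 2*K)" by (simp only: power_add)
      also have "(J+K) + 2*J + 2*K = 3*J+3*K" by simp
      finally show ?thesis .
    qed
    ultimately show ?thesis by simp
  qed
  have "int q^2 dvd B - A"
    using cong_trans[OF cB cong_sym[OF cA]] by (simp add: cong_iff_dvd_diff)
  hence "int p^(2*(r-1-e)) * int q^2 dvd T N j * (B - A)"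
    using e(4) by (simp add: mult_dvd_mono)
  moreover have "int p^(2*(r-1-e)) * int q^2 = int p ^ (2*r)"
  proof -
    have "int p^(2*(r-1-e)) * int q^2 = int p ^ (2*(r-1-e) + 2*Suc e)"
    proof -
      have "int q^2 = int p ^ (2*Suc e)" unfolding q_def of_nat_power power_mult[symmetric] by (simp add: mult.commute)
      thus ?thesis by (simp add: power_add)
    qed
    also have "2*(r-1-e) + 2*Suc e = 2*r" using e(1) r by simp
    finally show ?thesis .
  qed
  moreover have "T N j * (B - A) = (T (p*N) (p*j) - T N j) * A"
    using TAB by (simp add: algebra_simps)
  ultimately have d: "int p ^ (2*r) dvd (T (p*N) (p*j) - T N j) * A" by simp
  have "coprime (int p ^ (2*r)) A"
    unfolding A_def using U_coprime[OF p(1)] by simp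
  hence "int p ^ (2*r) dvd T (p*N) (p*j) - T N j"
    using d by (simp add: coprime_dvd_mult_left_iff)
  thus ?thesis by (simp add: cong_iff_dvd_diff)
qed

theorem mainTheorem3:
  fixes p m r :: nat
  assumes "prime p" and "odd p" and "m > 0" and "r > 0"
  shows "[S (m * p ^ r) = S (m * p ^ (r - 1))] (mod (int p) ^ (2 * r))"
proof -
  define N where "N = m * p^(r-1)"
  have n: "m * p^r = p * N" using assms(4) unfolding N_def
    by (metis Suc_diff_1 mult.left_commute power_Suc)
  have pN: "p^(r-1) dvd N" by (simp add: N_def)
  have pn: "p^r dvd p*N" using n by (metis dvd_triv_right)
  define K0 where "K0 = {k\<in>{0..p*N}. p dvd k}"
  define K1 where "K1 = {k\<in>{0..p*N}. \<not> p dvd k}"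
  have split: "{0..p*N} = K0 \<union> K1" by (auto simp: K0_def K1_def)
  have img: "K0 = (\<lambda>j. p*j) ` {0..N}"
  proof
    show "K0 \<subseteq> (\<lambda>j. p*j) ` {0..N}"
    proof
      fix k assume "k \<in> K0"
      hence "p dvd k" "k \<le> p*N" by (auto simp: K0_def)
      then obtain j where jj: "k = p*j" by (auto elim!: dvdE)
      hence "p*j \<le> p*N" using \<open>k \<le> p*N\<close> by simp
      hence "j \<le> N" using assms(1) by (simp add: prime_gt_0_nat)
      with jj show "k \<in> (\<lambda>j. p*j) ` {0..N}" by auto
    qed
    show "(\<lambda>j. p*j) ` {0..N} \<subseteq> K0" by (auto simp: K0_def)
  qed
  have inj: "inj_on (\<lambda>j. p*j) {0..N}"
    using assms(1) by (auto simp: inj_on_def prime_gt_0_nat)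
  have "S (p*N) = (\<Sum>k\<in>K0. T (p*N) k) + (\<Sum>k\<in>K1. T (p*N) k)"
    unfolding S_T split by (rule sum.union_disjoint) (auto simp: K0_def K1_def)
  also have "(\<Sum>k\<in>K0. T (p*N) k) = (\<Sum>j\<in>{0..N}. T (p*N) (p*j))"
    unfolding img by (simp add: sum.reindex[OF inj])
  finally have eq: "S (p*N) = (\<Sum>j\<in>{0..N}. T (p*N) (p*j)) + (\<Sum>k\<in>K1. T (p*N) k)" .
  have c1: "[(\<Sum>k\<in>K1. T (p*N) k) = 0] (mod int p ^ (2*r))"
  proof -
    have "int p ^ (2*r) dvd (\<Sum>k\<in>K1. T (p*N) k)"
    proof (rule dvd_sum)
      fix k assume k: "k \<in> K1"
      have "int p^(2*(r-0)) dvd T (p*N) k"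
        by (rule T_pow_dvd[OF assms(1) pn]) (use k in \<open>auto simp: K1_def\<close>)
      thus "int p ^ (2*r) dvd T (p*N) k" by simp
    qed
    thus ?thesis by (simp add: cong_0_iff)
  qed
  have c2: "[(\<Sum>j\<in>{0..N}. T (p*N) (p*j)) = (\<Sum>j\<in>{0..N}. T N j)] (mod int p ^ (2*r))"
    by (rule cong_sum) (use term_cong[OF assms(1,2,4) pN] in auto)
  have "[S (p*N) = (\<Sum>j\<in>{0..N}. T N j) + 0] (mod int p ^ (2*r))"
    unfolding eq by (rule cong_add[OF c2 c1])
  thus ?thesis unfolding n N_def[symmetric] S_T by simp
qed

end
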